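(* An ample class $C\subseteq 2^X$ admits a corner peeling if and only if there exists an acyclic orientation of the edges of $G(C)$ that is a unique sink orientation.
   Context: A cube of $2^X$ is $\{T\cup Z:Z\subseteq Y\}$ with $Y\subseteq X$, $T\subseteq X\setminus Y$, support $\mathrm{supp}=Y$; a cube of $C$ is one contained in $C$. $Y$ is shattered by $C$ if $\{c\cap Y:c\in C\}=2^Y$; $C$ is ample if every shattered set is the support of a cube of $C$. A corner of $C$ is a concept lying in exactly one inclusion-maximal cube of $C$. A corner peeling is an ordering $c_1,\dots,c_m$ of $C$ such that each $c_i$ is a corner of $\{c_1,\dots,c_i\}$. $G(C)$ is the graph on $C$ with an $x$-edge $cc'$ whenever $c\Delta c'=\{x\}$. For an orientation $o$ of $G(C)$, the out-map $r_o(c)$ is the set of $x$ such that the $x$-edge at $c$ is directed away from $c$. $o$ is a unique sink orientation if (C1) for every $c$, the cube of $2^X$ with support $r_o(c)$ containing $c$ is contained in $C$, and (C2) every cube of $C$ contains exactly one vertex that is a sink of $o$ restricted to the edges of that cube. *)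

theory Defs
  imports Main
begin

definition cube_set :: "'a set \<Rightarrow> 'a set \<Rightarrow> 'a set set" where
  "cube_set T Y = {T \<union> Z | Z. Z \<subseteq> Y}"

definition is_cube :: "'a set \<Rightarrow> 'a set set \<Rightarrow> bool" where
  "is_cube X Q \<longleftrightarrow> (\<exists>Y T. Y \<subseteq> X \<and> T \<subseteq> X - Y \<and> Q = cube_set T Y)"

definition cube_of :: "'a set \<Rightarrow> 'a set set \<Rightarrow> 'a set set \<Rightarrow> bool" where
  "cube_of X C Q \<longleftrightarrow> is_cube X Q \<and> Q \<subseteq> C"

definition shatters :: "'a set set \<Rightarrow> 'a set \<Rightarrow> bool" where
  "shatters C Y \<longleftrightarrow> (\<lambda>c. c \<inter> Y) ` C = Pow Y"

definition ample :: "'a set \<Rightarrow> 'a set set \<Rightarrow> bool" where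
  "ample X C \<longleftrightarrow> C \<subseteq> Pow X \<and>
     (\<forall>Y. Y \<subseteq> X \<and> shatters C Y \<longrightarrow> (\<exists>T. T \<subseteq> X - Y \<and> cube_set T Y \<subseteq> C))"

definition max_cube_of :: "'a set \<Rightarrow> 'a set set \<Rightarrow> 'a set set \<Rightarrow> bool" where
  "max_cube_of X C Q \<longleftrightarrow> cube_of X C Q \<and> \<not> (\<exists>Q'. cube_of X C Q' \<and> Q \<subset> Q')"

definition corner :: "'a set \<Rightarrow> 'a set set \<Rightarrow> 'a set \<Rightarrow> bool" where
  "corner X C c \<longleftrightarrow> c \<in> C \<and> (\<exists>!Q. max_cube_of X C Q \<and> c \<in> Q)"

definition corner_peeling :: "'a set \<Rightarrow> 'a set set \<Rightarrow> 'a set list \<Rightarrow> bool" where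
  "corner_peeling X C cs \<longleftrightarrow> distinct cs \<and> set cs = C \<and>
     (\<forall>i < length cs. corner X (set (take (Suc i) cs)) (cs ! i))"

definition symdiff :: "'a set \<Rightarrow> 'a set \<Rightarrow> 'a set" where
  "symdiff A B = (A - B) \<union> (B - A)"

text \<open>Edges of the one-inclusion graph G(C).\<close>
definition is_edge :: "'a set set \<Rightarrow> 'a set \<Rightarrow> 'a set \<Rightarrow> bool" where
  "is_edge C c c' \<longleftrightarrow> c \<in> C \<and> c' \<in> C \<and> (\<exists>x. symdiff c c' = {x})"

definition orientation :: "'a set set \<Rightarrow> ('a set \<times> 'a set) set \<Rightarrow> bool" where
  "orientation C ori \<longleftrightarrow> (\<forall>(c, c') \<in> ori. is_edge C c c') \<and>
     (\<forall>c c'. is_edge C c c' \<longrightarrow> ((c, c') \<in> ori \<longleftrightarrow> (c', c) \<notin> ori))"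

definition out_map :: "'a set \<Rightarrow> ('a set \<times> 'a set) set \<Rightarrow> 'a set \<Rightarrow> 'a set" where
  "out_map X ori c = {x \<in> X. (c, symdiff c {x}) \<in> ori}"

definition unique_sink_orientation :: "'a set \<Rightarrow> 'a set set \<Rightarrow> ('a set \<times> 'a set) set \<Rightarrow> bool" where
  "unique_sink_orientation X C ori \<longleftrightarrow>
     (\<forall>c \<in> C. cube_set (c - out_map X ori c) (out_map X ori c) \<subseteq> C) \<and>
     (\<forall>Q. cube_of X C Q \<longrightarrow> (\<exists>!v. v \<in> Q \<and> (\<forall>w \<in> Q. (v, w) \<notin> ori)))"

end

theory Submission
  imports Defs
begin


lemma mem_cube: "s \<in> cube_set T Y \<longleftrightarrow> T \<subseteq> s \<and> s \<subseteq> T \<union> Y"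
  unfolding cube_set_def
proof
  assume "s \<in> {T \<union> Z |Z. Z \<subseteq> Y}" then show "T \<subseteq> s \<and> s \<subseteq> T \<union> Y" by auto
next
  assume "T \<subseteq> s \<and> s \<subseteq> T \<union> Y"
  then have "s = T \<union> (s - T) \<and> s - T \<subseteq> Y" by auto
  then show "s \<in> {T \<union> Z |Z. Z \<subseteq> Y}" by blast
qed

lemma cube_symdiff_sub: "T \<inter> Y = {} \<Longrightarrow> a \<in> cube_set T Y \<Longrightarrow> b \<in> cube_set T Y \<Longrightarrow> symdiff a b \<subseteq> Y"
  by (auto simp: mem_cube symdiff_def)

lemma cube_flip: "a \<in> cube_set T Y \<Longrightarrow> x \<in> Y \<Longrightarrow> T \<inter> Y = {} \<Longrightarrow> symdiff a {x} \<in> cube_set T Y"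
  by (auto simp: mem_cube symdiff_def)

lemma symdiff_eq: "symdiff a b = {x} \<longleftrightarrow> b = symdiff a {x}"
  unfolding symdiff_def by blast

lemma is_cubeE: "is_cube X Q \<Longrightarrow> (\<And>T Y. Q = cube_set T Y \<Longrightarrow> Y \<subseteq> X \<Longrightarrow> T \<subseteq> X \<Longrightarrow> T \<inter> Y = {} \<Longrightarrow> P) \<Longrightarrow> P"
  unfolding is_cube_def by blast

lemma cube_nonempty: "T \<in> cube_set T Y"
  by (simp add: mem_cube)

definition usink :: "('a set \<Rightarrow> 'a \<Rightarrow> bool) \<Rightarrow> 'a set \<Rightarrow> 'a set \<Rightarrow> 'a set \<Rightarrow> bool" where
  "usink arr T Y v \<longleftrightarrow> v \<in> cube_set T Y \<and> (\<forall>x\<in>Y. \<not> arr v x)"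

definition UH :: "('a set \<times> 'a set) set \<Rightarrow> ('a set \<Rightarrow> 'a \<Rightarrow> bool) \<Rightarrow> bool" where
  "UH K arr \<longleftrightarrow> (\<forall>T Y. (T,Y) \<in> K \<longrightarrow> (\<exists>!v. usink arr T Y v))"

lemma usink_split:
  assumes "i \<in> Y" "i \<notin> T"
  shows "usink arr T Y v \<longleftrightarrow> (usink arr T (Y - {i}) v \<or> usink arr (insert i T) (Y - {i}) v) \<and> \<not> arr v i"
  using assms unfolding usink_def mem_cube by auto

lemma flip1:
  assumes facet: "\<And>T Y i. (T,Y) \<in> K \<Longrightarrow> i \<in> Y \<Longrightarrow> (T, Y - {i}) \<in> K \<and> (insert i T, Y - {i}) \<in> K"
  and disj: "\<And>T Y. (T,Y) \<in> K \<Longrightarrow> T \<inter> Y = {}"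
  and H: "UH K arr"
  shows "UH K (\<lambda>u x. if x = i then \<not> arr u x else arr u x)" (is "UH K ?arr")
  unfolding UH_def
proof (intro allI impI)
  fix T Y assume TY: "(T,Y) \<in> K"
  show "\<exists>!v. usink ?arr T Y v"
  proof (cases "i \<in> Y")
    case False
    have "usink ?arr T Y v = usink arr T Y v" for v
      using False unfolding usink_def by auto
    then show ?thesis using H TY unfolding UH_def by simp
  next
    case True
    have iT: "i \<notin> T" using disj[OF TY] True by auto
    have eq: "usink ?arr T' (Y - {i}) v = usink arr T' (Y - {i}) v" for T' v
      unfolding usink_def by auto
    obtain s0 where s0: "\<And>v. usink arr T (Y - {i}) v \<longleftrightarrow> v = s0"
      using H facet[OF TY True] unfolding UH_def by metis
    obtain s1 where s1: "\<And>v. usink arr (insert i T) (Y - {i}) v \<longleftrightarrow> v = s1"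
      using H facet[OF TY True] unfolding UH_def by metis
    have ne: "s0 \<noteq> s1"
    proof -
      have "usink arr T (Y - {i}) s0" "usink arr (insert i T) (Y - {i}) s1" using s0 s1 by auto
      then have "i \<notin> s0" "i \<in> s1" using iT unfolding usink_def mem_cube by auto
      then show ?thesis by auto
    qed
    have A: "usink arr T Y v \<longleftrightarrow> (v = s0 \<or> v = s1) \<and> \<not> arr v i" for v
      using usink_split[OF True iT, of arr v] s0 s1 by auto
    have B: "usink ?arr T Y v \<longleftrightarrow> (v = s0 \<or> v = s1) \<and> arr v i" for v
      using usink_split[OF True iT, of ?arr v] s0 s1 eq by auto
    have AA: "usink arr T Y = (\<lambda>v. (v = s0 \<or> v = s1) \<and> \<not> arr v i)" using A by (simp add: fun_eq_iff)
    have "Ex1 (usink arr T Y)" using H TY unfolding UH_def by simp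
    then have "\<exists>!v. (v = s0 \<or> v = s1) \<and> \<not> arr v i" unfolding AA .
    then have "\<exists>!v. (v = s0 \<or> v = s1) \<and> arr v i" using ne by blast
    then show ?thesis using B by simp
  qed
qed

lemma flipA:
  assumes facet: "\<And>T Y i. (T,Y) \<in> K \<Longrightarrow> i \<in> Y \<Longrightarrow> (T, Y - {i}) \<in> K \<and> (insert i T, Y - {i}) \<in> K"
  and disj: "\<And>T Y. (T,Y) \<in> K \<Longrightarrow> T \<inter> Y = {}"
  and H: "UH K arr" and fin: "finite A"
  shows "UH K (\<lambda>u x. if x \<in> A then \<not> arr u x else arr u x)"
  using fin
proof (induction A rule: finite_induct)
  case empty then show ?case using H by simp
next
  case (insert i A)
  have "(\<lambda>u x. if x \<in> insert i A then \<not> arr u x else arr u x)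
     = (\<lambda>u x. if x = i then \<not> (if x \<in> A then \<not> arr u x else arr u x) else (if x \<in> A then \<not> arr u x else arr u x))"
    using insert(2) by (auto simp: fun_eq_iff)
  then show ?case using flip1[OF facet disj insert(3)] by simp
qed

lemma unique_source:
  assumes facet: "\<And>T Y i. (T,Y) \<in> K \<Longrightarrow> i \<in> Y \<Longrightarrow> (T, Y - {i}) \<in> K \<and> (insert i T, Y - {i}) \<in> K"
  and disj: "\<And>T Y. (T,Y) \<in> K \<Longrightarrow> T \<inter> Y = {}"
  and H: "UH K arr" and fin: "finite Y0" and K0: "(T0, Y0) \<in> K"
  and u: "u \<in> cube_set T0 Y0" "\<forall>x\<in>Y0. arr u x"
  and v: "v \<in> cube_set T0 Y0" "\<forall>x\<in>Y0. arr v x"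
  shows "u = v"
proof -
  let ?f = "\<lambda>u x. if x \<in> Y0 then \<not> arr u x else arr u x"
  have "UH K ?f" by (rule flipA[OF facet disj H fin])
  then have "\<exists>!w. usink ?f T0 Y0 w" using K0 unfolding UH_def by blast
  moreover have "usink ?f T0 Y0 u" "usink ?f T0 Y0 v" using u v unfolding usink_def by auto
  ultimately show ?thesis by blast
qed



lemma ori_edge: "orientation C ori \<Longrightarrow> (a,b) \<in> ori \<Longrightarrow> is_edge C a b"
  unfolding orientation_def by blast

lemma ori_tot: "orientation C ori \<Longrightarrow> is_edge C a b \<Longrightarrow> (a,b) \<in> ori \<longleftrightarrow> (b,a) \<notin> ori"
  unfolding orientation_def by blast

lemma sink_equiv:
  assumes "orientation C ori" "v \<in> cube_set T Y" "T \<inter> Y = {}"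
  shows "(\<forall>w\<in>cube_set T Y. (v,w) \<notin> ori) \<longleftrightarrow> (\<forall>x\<in>Y. (v, symdiff v {x}) \<notin> ori)"
proof
  assume "\<forall>w\<in>cube_set T Y. (v,w) \<notin> ori"
  then show "\<forall>x\<in>Y. (v, symdiff v {x}) \<notin> ori" using cube_flip[OF assms(2) _ assms(3)] by blast
next
  assume H: "\<forall>x\<in>Y. (v, symdiff v {x}) \<notin> ori"
  show "\<forall>w\<in>cube_set T Y. (v,w) \<notin> ori"
  proof (intro ballI notI)
    fix w assume w: "w \<in> cube_set T Y" and vw: "(v,w) \<in> ori"
    then obtain x where x: "symdiff v w = {x}" using ori_edge[OF assms(1)] unfolding is_edge_def by blast
    then have "x \<in> Y" using cube_symdiff_sub[OF assms(3) assms(2) w] by auto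
    moreover have "w = symdiff v {x}" using x symdiff_eq by metis
    ultimately show False using H vw by auto
  qed
qed

lemma backward:
  assumes finX: "finite X" and CX: "C \<subseteq> Pow X" and oC: "orientation C ori"
    and acy: "acyclic ori" and uso: "unique_sink_orientation X C ori"
  shows "\<exists>cs. corner_peeling X C cs"
proof -
  have finC: "finite C" using finite_subset[OF CX] finX by simp
  have "ori \<subseteq> C \<times> C"
  proof (rule subsetI)
    fix p assume p: "p \<in> ori"
    obtain a b where ab: "p = (a,b)" by (cases p)
    have "is_edge C a b" using ori_edge[OF oC] p ab by blast
    then show "p \<in> C \<times> C" unfolding is_edge_def ab by blast
  qed
  then have finO: "finite ori" using finC finite_subset by blast
  have wf: "wf ori" using finite_acyclic_wf[OF finO acy] .
  define K where "K = {(T,Y). Y \<subseteq> X \<and> T \<subseteq> X - Y \<and> cube_set T Y \<subseteq> C}"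
  define arr where "arr = (\<lambda>u x. (u, symdiff u {x}) \<in> ori)"
  have facet: "(T, Y - {i}) \<in> K \<and> (insert i T, Y - {i}) \<in> K" if "(T,Y) \<in> K" "i \<in> Y" for T Y i
  proof -
    have "cube_set T (Y - {i}) \<subseteq> cube_set T Y" "cube_set (insert i T) (Y - {i}) \<subseteq> cube_set T Y"
      using that by (auto simp: mem_cube)
    then show ?thesis using that unfolding K_def by auto
  qed
  have disj: "T \<inter> Y = {}" if "(T,Y) \<in> K" for T Y using that unfolding K_def by auto
  have H: "UH K arr" unfolding UH_def
  proof (intro allI impI)
    fix T Y assume TY: "(T,Y) \<in> K"
    then have "cube_of X C (cube_set T Y)" unfolding K_def cube_of_def is_cube_def by blast
    then have ex: "\<exists>!v. v \<in> cube_set T Y \<and> (\<forall>w\<in>cube_set T Y. (v,w) \<notin> ori)"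
      using uso unfolding unique_sink_orientation_def by blast
    have "usink arr T Y v \<longleftrightarrow> v \<in> cube_set T Y \<and> (\<forall>w\<in>cube_set T Y. (v,w) \<notin> ori)" for v
      using sink_equiv[OF oC _ disj[OF TY]] unfolding usink_def arr_def by blast
    then show "\<exists>!v. usink arr T Y v" using ex by simp
  qed
  have reach: "(v,w) \<in> ori\<^sup>*"
    if v: "v \<in> C" and w: "w \<in> cube_set (v - out_map X ori v) (out_map X ori v)" for v w
  proof -
    define r where "r = out_map X ori v"
    have rX: "r \<subseteq> X" unfolding r_def out_map_def by auto
    have vX: "v \<subseteq> X" using v CX by auto
    have RC: "cube_set (v - r) r \<subseteq> C" using uso v unfolding unique_sink_orientation_def r_def by blast
    have K0: "(v - r, r) \<in> K" unfolding K_def using rX vX RC by auto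
    have vR: "v \<in> cube_set (v - r) r" by (auto simp: mem_cube)
    have varr: "\<forall>x\<in>r. arr v x" unfolding r_def out_map_def arr_def by auto
    have finr: "finite r" using rX finX finite_subset by blast
    have "w \<in> cube_set (v - r) r \<longrightarrow> (v,w) \<in> ori\<^sup>*"
    proof (induction w rule: wf_induct_rule[OF wf])
      case (1 w)
      show ?case
      proof
        assume wR: "w \<in> cube_set (v - r) r"
        show "(v,w) \<in> ori\<^sup>*"
        proof (cases "\<forall>x\<in>r. arr w x")
          case True
          have "w = v" using unique_source[OF facet disj H finr K0 wR True vR varr] by blast
          then show ?thesis by simp
        next
          case False
          then obtain x where x: "x \<in> r" "\<not> arr w x" by blast
          define w' where "w' = symdiff w {x}"
          have w'R: "w' \<in> cube_set (v - r) r" unfolding w'_def using cube_flip[OF wR x(1)] by auto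
          have "symdiff w w' = {x}" unfolding w'_def using symdiff_eq by metis
          then have "is_edge C w w'" unfolding is_edge_def using wR w'R RC by blast
          then have "(w',w) \<in> ori" using ori_tot[OF oC] x(2) unfolding arr_def w'_def by blast
          moreover have "(v,w') \<in> ori\<^sup>*" using 1 calculation w'R by blast
          ultimately show ?thesis by simp
        qed
      qed
    qed
    then show ?thesis using w unfolding r_def by blast
  qed
  have peel: "\<forall>D. card D = n \<longrightarrow> D \<subseteq> C \<longrightarrow> (\<forall>c c'. c \<in> D \<longrightarrow> (c,c') \<in> ori \<longrightarrow> c' \<in> D) \<longrightarrow> (\<exists>cs. corner_peeling X D cs)" for n
  proof (induction n)
    case 0
    show ?case
    proof (intro allI impI)
      fix D :: "'a set set" assume "card D = 0" "D \<subseteq> C"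
      then have "D = {}" using finC finite_subset by (metis card_0_eq)
      then show "\<exists>cs. corner_peeling X D cs" unfolding corner_peeling_def by (intro exI[of _ "[]"]) simp
    qed
  next
    case (Suc n)
    show ?case
    proof (intro allI impI)
      fix D :: "'a set set" assume cD: "card D = Suc n" and DC: "D \<subseteq> C"
        and cl: "\<forall>c c'. c \<in> D \<longrightarrow> (c,c') \<in> ori \<longrightarrow> c' \<in> D"
      have finD: "finite D" using finC DC finite_subset by blast
      have "D \<noteq> {}" using cD by auto
      then obtain d0 where "d0 \<in> D" by blast
      then have "\<exists>z\<in>D. \<forall>y. (y,z) \<in> ori \<longrightarrow> y \<notin> D" using wf unfolding wf_eq_minimal by blast
      then obtain c where cD': "c \<in> D" and noin: "\<And>d. (d,c) \<in> ori \<Longrightarrow> d \<notin> D"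
        by blast
      define r where "r = out_map X ori c"
      define R where "R = cube_set (c - r) r"
      have rX: "r \<subseteq> X" unfolding r_def out_map_def by auto
      have cC: "c \<in> C" using cD' DC by auto
      have cX: "c \<subseteq> X" using cC CX by auto
      have cR: "c \<in> R" unfolding R_def by (auto simp: mem_cube)
      have clstar: "(a,b) \<in> ori\<^sup>* \<Longrightarrow> a \<in> D \<Longrightarrow> b \<in> D" for a b
        by (induction rule: rtrancl_induct) (use cl in auto)
      have RD: "R \<subseteq> D" using reach[OF cC] clstar cD' unfolding R_def r_def by blast
      have "is_cube X R" unfolding is_cube_def R_def
        by (rule exI[of _ r], rule exI[of _ "c - r"]) (use rX cX in auto)
      then have Rcube: "cube_of X D R" unfolding cube_of_def using RD by blast
      have sub: "Q \<subseteq> R" if Q: "cube_of X D Q" "c \<in> Q" for Q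
      proof -
        obtain T Y where QTY: "Q = cube_set T Y" "Y \<subseteq> X" "T \<subseteq> X" "T \<inter> Y = {}"
          using Q(1) unfolding cube_of_def by (metis is_cubeE)
        have Yr: "Y \<subseteq> r"
        proof
          fix x assume x: "x \<in> Y"
          have c': "symdiff c {x} \<in> D" using cube_flip[of c T Y x] QTY Q x unfolding cube_of_def by auto
          have "symdiff c (symdiff c {x}) = {x}" using symdiff_eq by metis
          then have "is_edge C c (symdiff c {x})" unfolding is_edge_def using cC c' DC by blast
          moreover have "(symdiff c {x}, c) \<notin> ori" using noin c' by blast
          ultimately have "(c, symdiff c {x}) \<in> ori" using ori_tot[OF oC] by blast
          then show "x \<in> r" unfolding r_def out_map_def using x QTY by auto
        qed
        have Tc: "T \<subseteq> c" "c \<subseteq> T \<union> Y" using Q(2) QTY by (auto simp: mem_cube)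
        show ?thesis
        proof
          fix s assume "s \<in> Q"
          then have "T \<subseteq> s" "s \<subseteq> T \<union> Y" by (auto simp: QTY mem_cube)
          then show "s \<in> R" unfolding R_def mem_cube using Tc Yr by blast
        qed
      qed
      have Rmax: "max_cube_of X D R" unfolding max_cube_of_def using Rcube sub cR by blast
      have ex1: "\<exists>!Q. max_cube_of X D Q \<and> c \<in> Q"
      proof (rule ex1I[of _ R])
        show "max_cube_of X D R \<and> c \<in> R" using Rmax cR by blast
        fix Q assume "max_cube_of X D Q \<and> c \<in> Q"
        then show "Q = R" using sub Rcube unfolding max_cube_of_def by blast
      qed
      have corner: "corner X D c" unfolding corner_def using cD' ex1 by blast
      define D' where "D' = D - {c}"
      have cD'': "card D' = n" unfolding D'_def using cD cD' finD by simp
      have cl': "\<forall>a b. a \<in> D' \<longrightarrow> (a,b) \<in> ori \<longrightarrow> b \<in> D'" unfolding D'_def using cl noin by blast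
      obtain cs where cs: "corner_peeling X D' cs" using Suc.IH cD'' cl' DC unfolding D'_def by blast
      have "corner_peeling X D (cs @ [c])"
        unfolding corner_peeling_def
      proof (intro conjI allI impI)
        show "distinct (cs @ [c])" using cs unfolding corner_peeling_def D'_def by auto
        show "set (cs @ [c]) = D" using cs cD' unfolding corner_peeling_def D'_def by auto
        fix i assume i: "i < length (cs @ [c])"
        show "corner X (set (take (Suc i) (cs @ [c]))) ((cs @ [c]) ! i)"
        proof (cases "i < length cs")
          case True
          have e1: "take (Suc i) (cs @ [c]) = take (Suc i) cs" using True by simp
          have e2: "(cs @ [c]) ! i = cs ! i" using True by (simp add: nth_append)
          have "corner X (set (take (Suc i) cs)) (cs ! i)" using cs True unfolding corner_peeling_def by blast
          then show ?thesis unfolding e1 e2 .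
        next
          case False
          then have "i = length cs" using i by simp
          then have e1: "take (Suc i) (cs @ [c]) = cs @ [c]" "(cs @ [c]) ! i = c" by simp_all
          have "set (cs @ [c]) = D" using cs cD' unfolding corner_peeling_def D'_def by auto
          then show ?thesis unfolding e1 using corner by simp
        qed
      qed
      then show "\<exists>cs. corner_peeling X D cs" by blast
    qed
  qed
  have clC: "\<forall>c c'. c \<in> C \<longrightarrow> (c,c') \<in> ori \<longrightarrow> c' \<in> C"
    using ori_edge[OF oC] unfolding is_edge_def by blast
  show ?thesis using peel[of "card C", rule_format, of C] clC by blast
qed



definition adj :: "'a set \<Rightarrow> 'a set \<Rightarrow> bool" where
  "adj a b \<longleftrightarrow> (\<exists>x. symdiff a b = {x})"

definition conn :: "'a set set \<Rightarrow> bool" where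
  "conn S \<longleftrightarrow> (\<forall>A. A \<subseteq> S \<longrightarrow> A \<noteq> {} \<longrightarrow> A \<noteq> S \<longrightarrow> (\<exists>a\<in>A. \<exists>b\<in>S - A. adj a b))"

lemma max_exists:
  assumes "finite D" "cube_of X D E"
  shows "\<exists>M. max_cube_of X D M \<and> E \<subseteq> M"
proof -
  let ?F = "{Q. cube_of X D Q \<and> E \<subseteq> Q}"
  have "?F \<subseteq> Pow D" unfolding cube_of_def by auto
  moreover have "finite (Pow D)" using assms(1) by simp
  ultimately have fin: "finite ?F" by (rule finite_subset)
  have ne: "E \<in> ?F" using assms(2) by auto
  have "?F \<noteq> {}" using ne by blast
  from finite_has_maximal[OF fin this] obtain m where
    m1: "m \<in> ?F" and m2: "\<forall>b\<in>?F. m \<le> b \<longrightarrow> m = b" by (rule bexE)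
  have m: "m \<in> ?F" "\<And>b. b \<in> ?F \<Longrightarrow> m \<subseteq> b \<Longrightarrow> m = b" using m1 m2 by simp_all
  have "max_cube_of X D m" unfolding max_cube_of_def
  proof (intro conjI notI)
    show "cube_of X D m" using m(1) by blast
    assume "\<exists>Q'. cube_of X D Q' \<and> m \<subset> Q'"
    then obtain Q' where "cube_of X D Q'" "m \<subset> Q'" by blast
    then show False using m by blast
  qed
  then show ?thesis using m(1) by blast
qed

lemma edge_cube:
  assumes "c \<subseteq> X" "x \<in> X"
  shows "is_cube X (cube_set (c - {x}) {x})" "c \<in> cube_set (c - {x}) {x}" "symdiff c {x} \<in> cube_set (c - {x}) {x}"
proof -
  show "is_cube X (cube_set (c - {x}) {x})" unfolding is_cube_def
    by (rule exI[of _ "{x}"], rule exI[of _ "c - {x}"]) (use assms in auto)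
  show "c \<in> cube_set (c - {x}) {x}" "symdiff c {x} \<in> cube_set (c - {x}) {x}"
    by (auto simp: mem_cube symdiff_def)
qed

lemma edge_cube_eq: "cube_set (c - {x}) {x} = {c, symdiff c {x}}"
proof -
  have "cube_set (c - {x}) {x} = {c - {x}, insert x c}"
  proof
    show "cube_set (c - {x}) {x} \<subseteq> {c - {x}, insert x c}"
    proof
      fix s assume "s \<in> cube_set (c - {x}) {x}"
      then have s: "c - {x} \<subseteq> s" "s \<subseteq> insert x c" by (auto simp: mem_cube)
      show "s \<in> {c - {x}, insert x c}"
      proof (cases "x \<in> s")
        case True then have "s = insert x c" using s by auto
        then show ?thesis by simp
      next
        case False then have "s = c - {x}" using s by auto
        then show ?thesis by simp
      qed
    qed
    show "{c - {x}, insert x c} \<subseteq> cube_set (c - {x}) {x}" by (auto simp: mem_cube)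
  qed
  also have "\<dots> = {c, symdiff c {x}}"
    by (cases "x \<in> c") (auto simp: symdiff_def insert_absorb)
  finally show ?thesis .
qed

lemma corner_nbr:
  assumes finD: "finite D" and DX: "D \<subseteq> Pow X" and cor: "corner X D c"
    and M: "max_cube_of X D M" "c \<in> M" and a: "a \<in> D" "adj c a"
  shows "a \<in> M"
proof -
  obtain x where x: "symdiff c a = {x}" using a(2) unfolding adj_def by blast
  have cD: "c \<in> D" using cor unfolding corner_def by blast
  have cX: "c \<subseteq> X" "a \<subseteq> X" using cD a DX by auto
  have xX: "x \<in> X" using x cX unfolding symdiff_def by auto
  have ae: "a = symdiff c {x}" using x symdiff_eq by metis
  have E: "cube_of X D (cube_set (c - {x}) {x})"
    unfolding cube_of_def edge_cube_eq using edge_cube[OF cX(1) xX] cD a(1) ae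
    by (simp add: edge_cube_eq)
  obtain M' where M': "max_cube_of X D M'" "cube_set (c - {x}) {x} \<subseteq> M'" using max_exists[OF finD E] by blast
  have "c \<in> M'" using M'(2) edge_cube(2)[OF cX(1) xX] by blast
  then have "M' = M" using cor M M'(1) unfolding corner_def by blast
  then show ?thesis using M'(2) edge_cube(3)[OF cX(1) xX] ae by blast
qed

lemma cube_conn:
  assumes finY: "finite Y" and disj: "T \<inter> Y = {}"
  shows "conn (cube_set T Y)"
  unfolding conn_def
proof (intro allI impI)
  fix A assume A: "A \<subseteq> cube_set T Y" "A \<noteq> {}" "A \<noteq> cube_set T Y"
  obtain a where a: "a \<in> A" using A by blast
  obtain b where b: "b \<in> cube_set T Y" "b \<notin> A" using A by blast
  have "\<forall>a. a \<in> A \<longrightarrow> card (symdiff a b) = n \<longrightarrow> (\<exists>a\<in>A. \<exists>b\<in>cube_set T Y - A. adj a b)" for n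
  proof (induction n rule: less_induct)
    case (less n)
    show ?case
    proof (intro allI impI)
      fix a assume a: "a \<in> A" "card (symdiff a b) = n"
      have aQ: "a \<in> cube_set T Y" using a A by blast
      have sub: "symdiff a b \<subseteq> Y" using cube_symdiff_sub[OF disj aQ b(1)] .
      have "a \<noteq> b" using a b by blast
      then have "symdiff a b \<noteq> {}" unfolding symdiff_def by blast
      then obtain x where x: "x \<in> symdiff a b" by blast
      define a' where "a' = symdiff a {x}"
      have a'Q: "a' \<in> cube_set T Y" unfolding a'_def using cube_flip[OF aQ _ disj] x sub by blast
      have adj: "adj a a'" unfolding adj_def a'_def by (rule exI[of _ x]) (auto simp: symdiff_def)
      show "\<exists>a\<in>A. \<exists>b\<in>cube_set T Y - A. adj a b"
      proof (cases "a' \<in> A")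
        case False then show ?thesis using a a'Q adj by blast
      next
        case True
        have eq: "symdiff a' b = symdiff a b - {x}" unfolding a'_def symdiff_def using x
          unfolding symdiff_def by auto
        have fin: "finite (symdiff a b)" using sub finY finite_subset by blast
        have "card (symdiff a b - {x}) < card (symdiff a b)" by (rule card_Diff1_less[OF fin x])
        then have "card (symdiff a' b) < n" unfolding eq using a(2) by simp
        then show ?thesis using less True by blast
      qed
    qed
  qed
  then show "\<exists>a\<in>A. \<exists>b\<in>cube_set T Y - A. adj a b" using a by blast
qed

lemma remove_conn:
  assumes finD: "finite D" and DX: "D \<subseteq> Pow X" and cor: "corner X D c"
    and Q: "T \<inter> Y = {}" and cn: "conn (cube_set T Y \<inter> D)"
  shows "conn (cube_set T Y \<inter> (D - {c}))"
proof (cases "c \<in> cube_set T Y")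
  case False
  then have "cube_set T Y \<inter> (D - {c}) = cube_set T Y \<inter> D" by blast
  then show ?thesis using cn by simp
next
  case cQ: True
  let ?Q = "cube_set T Y"
  let ?S = "?Q \<inter> D"
  let ?S' = "?Q \<inter> (D - {c})"
  have cD: "c \<in> D" using cor unfolding corner_def by blast
  obtain M where M: "max_cube_of X D M" "c \<in> M" using cor unfolding corner_def by blast
  show ?thesis unfolding conn_def
  proof (intro allI impI)
    fix A assume A: "A \<subseteq> ?S'" "A \<noteq> {}" "A \<noteq> ?S'"
    obtain e where e: "e \<in> ?S'" "e \<notin> A" using A by blast
    show "\<exists>a\<in>A. \<exists>b\<in>?S' - A. adj a b"
    proof (rule ccontr)
      assume nc: "\<not> ?thesis"
      have AS: "A \<subseteq> ?S" using A(1) by blast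
      have AS2: "A \<noteq> ?S" using A(1) cQ cD by blast
      have "\<exists>a\<in>A. \<exists>b\<in>?S - A. adj a b" using cn[unfolded conn_def, rule_format, OF AS A(2) AS2] .
      then obtain a where a: "a \<in> A" "adj a c" using nc by blast
      have AS3: "insert c A \<subseteq> ?S" using A(1) cQ cD by blast
      have AS4: "insert c A \<noteq> ?S" using e by blast
      have "\<exists>a\<in>insert c A. \<exists>b\<in>?S - insert c A. adj a b"
        using cn[unfolded conn_def, rule_format, OF AS3 _ AS4] by blast
      then obtain b where b: "b \<in> ?S' - A" "adj c b" using nc by blast
      obtain x where x: "symdiff c a = {x}" using a(2) unfolding adj_def symdiff_def by (metis Un_commute)
      obtain y where y: "symdiff c b = {y}" using b(2) unfolding adj_def by blast
      have ae: "a = symdiff c {x}" using x symdiff_eq by metis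
      have be: "b = symdiff c {y}" using y symdiff_eq by metis
      have "a \<noteq> b" using a b by blast
      then have xy: "x \<noteq> y" using ae be by blast
      have aS: "a \<in> ?S'" "b \<in> ?S'" using a A b by blast+
      have aM: "a \<in> M" using corner_nbr[OF finD DX cor M, of a] aS a(2) unfolding adj_def symdiff_def
        by (metis (no_types, lifting) Int_iff Diff_iff Un_commute)
      have bM: "b \<in> M" using corner_nbr[OF finD DX cor M, of b] aS b(2) by blast
      obtain T' Y' where MT: "M = cube_set T' Y'" "T' \<inter> Y' = {}" "cube_set T' Y' \<subseteq> D"
        using M(1) unfolding max_cube_of_def cube_of_def is_cube_def by blast
      have yM: "y \<in> Y'" using cube_symdiff_sub[OF MT(2), of c b] M(2) bM MT y by auto
      have yQ: "y \<in> Y" using cube_symdiff_sub[OF Q cQ, of b] aS y by auto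
      define d where "d = symdiff a {y}"
      have dM: "d \<in> M" unfolding d_def using cube_flip[of a T' Y' y] aM MT yM by auto
      have dQ: "d \<in> ?Q" unfolding d_def using cube_flip[OF _ yQ Q, of a] aS by auto
      have dc: "d \<noteq> c" unfolding d_def ae using xy by (auto simp: symdiff_def)
      have dS: "d \<in> ?S'" using dM dQ dc MT by blast
      have ad: "adj a d" unfolding adj_def d_def by (rule exI[of _ y]) (auto simp: symdiff_def)
      have db: "adj d b" unfolding adj_def d_def ae be by (rule exI[of _ x]) (use xy in \<open>auto simp: symdiff_def\<close>)
      show False
      proof (cases "d \<in> A")
        case True then show False using nc db b by blast
      next
        case False then show False using nc ad a dS by blast
      qed
    qed
  qed
qed



lemma forward:
  assumes finX: "finite X" and CX: "C \<subseteq> Pow X" and cs: "corner_peeling X C cs"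
  shows "\<exists>ori. orientation C ori \<and> acyclic ori \<and> unique_sink_orientation X C ori"
proof -
  define n where "n = length cs"
  have dist: "distinct cs" and setC: "set cs = C"
    and cor: "\<And>i. i < n \<Longrightarrow> corner X (set (take (Suc i) cs)) (cs ! i)"
    using cs unfolding corner_peeling_def n_def by auto
  define S where "S j = set (take j cs)" for j
  define ori where "ori = {(cs!i, cs!j) | i j. j < i \<and> i < n \<and> is_edge C (cs!i) (cs!j)}"
  have idx: "i < n \<Longrightarrow> j < n \<Longrightarrow> cs!i = cs!j \<longleftrightarrow> i = j" for i j
    using dist nth_eq_iff_index_eq unfolding n_def by blast
  have oriE: "\<exists>i j. j < i \<and> i < n \<and> a = cs!i \<and> b = cs!j \<and> is_edge C a b" if "(a,b) \<in> ori" for a b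
    using that unfolding ori_def by blast
  have oriI: "(cs!i, cs!j) \<in> ori \<longleftrightarrow> j < i \<and> is_edge C (cs!i) (cs!j)" if "i < n" "j < n" for i j
  proof
    assume "(cs!i, cs!j) \<in> ori"
    then obtain i' j' where "j' < i'" "i' < n" "cs!i = cs!i'" "cs!j = cs!j'" "is_edge C (cs!i) (cs!j)"
      using oriE by blast
    then show "j < i \<and> is_edge C (cs!i) (cs!j)" using idx that by (metis order.strict_trans)
  next
    assume "j < i \<and> is_edge C (cs!i) (cs!j)"
    then show "(cs!i, cs!j) \<in> ori" unfolding ori_def using that by blast
  qed
  have inC: "\<exists>i<n. c = cs!i" if "c \<in> C" for c
    using that setC in_set_conv_nth unfolding n_def by metis
  have S_mem: "c \<in> S j \<longleftrightarrow> (\<exists>k<j. c = cs!k)" if "j \<le> n" for c j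
    unfolding S_def using that unfolding n_def
    by (auto simp: in_set_conv_nth)
  have SC: "S j \<subseteq> C" for j unfolding S_def using setC set_take_subset by metis
  have finC: "finite C" using finite_subset[OF CX] finX by simp
  have SX: "S j \<subseteq> Pow X" "finite (S j)" for j using SC CX finC finite_subset by blast+
  have sym: "is_edge C a b \<Longrightarrow> is_edge C b a" for a b unfolding is_edge_def symdiff_def by (metis Un_commute)
  have adj_edge: "a \<in> C \<Longrightarrow> b \<in> C \<Longrightarrow> adj a b \<Longrightarrow> is_edge C a b" for a b unfolding adj_def is_edge_def by blast
  have oC: "orientation C ori" unfolding orientation_def
  proof (intro conjI allI impI)
    show "\<forall>(c, c')\<in>ori. is_edge C c c'" using oriE by blast
    fix c c' assume e: "is_edge C c c'"
    then obtain i j where ij: "i < n" "j < n" "c = cs!i" "c' = cs!j" using inC unfolding is_edge_def by blast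
    have "c \<noteq> c'" using e unfolding is_edge_def symdiff_def by auto
    then have "i \<noteq> j" using ij by blast
    then show "(c, c') \<in> ori \<longleftrightarrow> (c', c) \<notin> ori" using oriI ij e sym by auto
  qed
  have tr: "\<exists>i j. j < i \<and> i < n \<and> a = cs!i \<and> b = cs!j" if "(a,b) \<in> ori\<^sup>+" for a b
    using that
  proof (induction rule: trancl_induct)
    case (base y) then show ?case using oriE by blast
  next
    case (step y z)
    obtain i j where ij: "j < i" "i < n" "a = cs!i" "y = cs!j" using step.IH by blast
    obtain i' j' where ij': "j' < i'" "i' < n" "y = cs!i'" "z = cs!j'" using oriE[OF step.hyps(2)] by blast
    have "j = i'" using idx ij ij' by (metis order.strict_trans)
    then show ?case using ij ij' by (metis order.strict_trans)
  qed
  have acy: "acyclic ori" unfolding acyclic_def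
  proof (intro allI notI)
    fix x assume "(x,x) \<in> ori\<^sup>+"
    then obtain i j where "j < i" "i < n" "x = cs!i" "x = cs!j" using tr by blast
    then show False using idx by (metis order.strict_trans nat_neq_iff)
  qed
  have connQ: "conn (cube_set T Y \<inter> S (n - k))" if TY: "Y \<subseteq> X" "T \<inter> Y = {}" "cube_set T Y \<subseteq> C" "k \<le> n" for T Y k
    using that(4)
  proof (induction k)
    case 0
    have "S n = C" unfolding S_def n_def using setC by simp
    then show ?case using cube_conn[of Y T] TY finX finite_subset by (metis Int_absorb2 diff_zero)
  next
    case (Suc k)
    define j where "j = n - Suc k"
    have jn: "j < n" "Suc j = n - k" using Suc.prems unfolding j_def by auto
    have Sj: "S j = S (Suc j) - {cs!j}"
    proof -
      have "take (Suc j) cs = take j cs @ [cs!j]" using jn(1) n_def by (simp add: take_Suc_conv_app_nth)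
      then have "S (Suc j) = insert (cs!j) (S j)" unfolding S_def by simp
      moreover have "cs!j \<notin> S j" using S_mem[of j] jn idx by auto
      ultimately show ?thesis by auto
    qed
    have "conn (cube_set T Y \<inter> (S (Suc j) - {cs!j}))"
      using remove_conn[OF SX(2) SX(1) _ TY(2)] cor[OF jn(1)] Suc.IH Suc.prems jn unfolding S_def by auto
    then show ?case using Sj j_def by simp
  qed
  have C1: "cube_set (c - out_map X ori c) (out_map X ori c) \<subseteq> C" if c: "c \<in> C" for c
  proof -
    obtain i where i: "i < n" "c = cs!i" using inC c by blast
    define r where "r = out_map X ori c"
    have ci: "corner X (S (Suc i)) c" using cor[OF i(1)] i unfolding S_def by simp
    obtain M where M: "max_cube_of X (S (Suc i)) M" "c \<in> M" using ci unfolding corner_def by blast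
    obtain T Y where MT: "M = cube_set T Y" "T \<inter> Y = {}" "cube_set T Y \<subseteq> S (Suc i)"
      using M(1) unfolding max_cube_of_def cube_of_def is_cube_def by blast
    have rY: "r \<subseteq> Y"
    proof
      fix x assume x: "x \<in> r"
      then have o: "(c, symdiff c {x}) \<in> ori" unfolding r_def out_map_def by auto
      then obtain i' j where ij: "j < i'" "i' < n" "c = cs!i'" "symdiff c {x} = cs!j" using oriE by blast
      have "i' = i" using idx ij i by metis
      then have "j < Suc i" using ij by simp
      then have "symdiff c {x} \<in> S (Suc i)" using S_mem[of "Suc i"] ij(4) i(1) by auto
      moreover have "adj c (symdiff c {x})" unfolding adj_def by (rule exI[of _ x]) (auto simp: symdiff_def)
      ultimately have "symdiff c {x} \<in> M" using corner_nbr[OF SX(2) SX(1) ci M] by blast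
      then have "symdiff c (symdiff c {x}) \<subseteq> Y" using cube_symdiff_sub[OF MT(2)] M(2) MT(1) by blast
      then show "x \<in> Y" by (auto simp: symdiff_def)
    qed
    have Tc: "T \<subseteq> c" "c \<subseteq> T \<union> Y" using M(2) MT(1) by (auto simp: mem_cube)
    have "cube_set (c - r) r \<subseteq> M"
    proof
      fix s assume "s \<in> cube_set (c - r) r"
      then have s: "c - r \<subseteq> s" "s \<subseteq> c \<union> r" by (auto simp: mem_cube)
      have "T \<subseteq> s" using s(1) Tc(1) rY MT(2) by blast
      moreover have "s \<subseteq> T \<union> Y" using s(2) Tc(2) rY by blast
      ultimately show "s \<in> M" unfolding MT(1) mem_cube by blast
    qed
    then show ?thesis using MT SC unfolding r_def by blast
  qed
  have C2: "\<exists>!v. v \<in> Q \<and> (\<forall>w\<in>Q. (v, w) \<notin> ori)" if Q: "cube_of X C Q" for Q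
  proof -
    obtain T Y where QT: "Q = cube_set T Y" "Y \<subseteq> X" "T \<subseteq> X" "T \<inter> Y = {}"
      using Q unfolding cube_of_def by (metis is_cubeE)
    have QC: "Q \<subseteq> C" using Q unfolding cube_of_def by blast
    have notsink: "\<exists>w\<in>Q. (cs!i, w) \<in> ori" if ij: "j < i" "i < n" "cs!i \<in> Q" "cs!j \<in> Q" for i j
    proof -
      have cn: "conn (Q \<inter> S (Suc i))" using connQ[of Y T "n - Suc i"] QT QC ij by (simp add: Suc_diff_Suc)
      have ji: "j < Suc i" using ij by simp
      have m: "cs!i \<in> Q \<inter> S (Suc i)" "cs!j \<in> Q \<inter> S (Suc i)"
        using ij(2,3,4) ji S_mem[of "Suc i"] by auto
      have "cs!j \<noteq> cs!i" using idx ij by auto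
      then obtain b where b: "b \<in> Q \<inter> S (Suc i)" "b \<noteq> cs!i" "adj (cs!i) b"
        using cn m unfolding conn_def by (metis (no_types, lifting) Diff_iff empty_subsetI insert_subset singletonD singletonI insert_not_empty)
      obtain k where k: "k < Suc i" "b = cs!k" using b S_mem[of "Suc i"] ij by auto
      have "k < i" using k b by (metis less_antisym)
      moreover have "is_edge C (cs!i) b" using adj_edge b QC m by blast
      ultimately have "(cs!i, b) \<in> ori" using oriI[of i k] k ij by simp
      then show ?thesis using b by blast
    qed
    have "T \<in> Q" using QT cube_nonempty by blast
    then obtain i0 where i0: "i0 < n" "cs!i0 \<in> Q" using inC QC by blast
    define m where "m = (LEAST i. cs!i \<in> Q)"
    have m: "cs!m \<in> Q" "m \<le> i0" unfolding m_def using i0 by (auto intro: LeastI Least_le)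
    have mn: "m < n" using m i0 by simp
    have msink: "\<forall>w\<in>Q. (cs!m, w) \<notin> ori"
    proof (intro ballI notI)
      fix w assume w: "w \<in> Q" "(cs!m, w) \<in> ori"
      then obtain i j where "j < i" "i < n" "cs!m = cs!i" "w = cs!j" using oriE by blast
      then show False using idx mn w(1) unfolding m_def by (metis Least_le leD)
    qed
    show ?thesis
    proof (rule ex1I[of _ "cs!m"])
      show "cs!m \<in> Q \<and> (\<forall>w\<in>Q. (cs!m, w) \<notin> ori)" using m msink by blast
      fix v assume v: "v \<in> Q \<and> (\<forall>w\<in>Q. (v, w) \<notin> ori)"
      then obtain i where i: "i < n" "v = cs!i" using inC QC by blast
      show "v = cs!m"
      proof (rule ccontr)
        assume "v \<noteq> cs!m"
        then have "i \<noteq> m" using i by blast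
        then consider "m < i" | "i < m" by linarith
        then show False
        proof cases
          case 1 then show False using notsink[of m i] i m v by blast
        next
          case 2 then show False using notsink[of i m] i m v mn msink by blast
        qed
      qed
    qed
  qed
  have "unique_sink_orientation X C ori" unfolding unique_sink_orientation_def using C1 C2 by blast
  then show ?thesis using oC acy by blast
qed


theorem proposition6p4:
  fixes X :: "'a set" and C :: "'a set set"
  assumes "finite X" and "ample X C"
  shows "(\<exists>cs. corner_peeling X C cs) \<longleftrightarrow>
         (\<exists>ori. orientation C ori \<and> acyclic ori \<and> unique_sink_orientation X C ori)"
proof -
  have CX: "C \<subseteq> Pow X" using assms(2) unfolding ample_def by blast
  show ?thesis using forward[OF assms(1) CX] backward[OF assms(1) CX] by blast
qed

end
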